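(* Let $C$ be a projective linear code of length $n$ over $\mathbb{Z}_4$ with exactly two nonzero Lee weights $w_1<w_2$. Then the following are equivalent: (1) $C$ is Plotkin-optimal; (2) $w_1=n$; (3) $w_2=|C|/2$.
   Context: A linear code of length $n$ over $\mathbb{Z}_4$ is a $\mathbb{Z}_4$-submodule of $\mathbb{Z}_4^n$. Lee weight: $w_L(0)=0,w_L(1)=1,w_L(2)=2,w_L(3)=1$, additive on vectors; $d_L(C)$ is the minimum nonzero Lee weight. $C$ is Plotkin-optimal if $d_L(C)=\lfloor\frac{|C|}{|C|-1}n\rfloor$. $C$ is projective if its dual with respect to $\sum x_iy_i\in\mathbb{Z}_4$ has minimum Lee distance at least $3$. *)

theory Defs
  imports Complex_Main "HOL-Library.Numeral_Type"
begin

type_synonym z4vec = "4 list"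

definition z4vecs :: "nat \<Rightarrow> z4vec set" where
  "z4vecs n = {x. length x = n}"

definition vadd :: "z4vec \<Rightarrow> z4vec \<Rightarrow> z4vec" where
  "vadd x y = map2 (+) x y"

definition smul :: "4 \<Rightarrow> z4vec \<Rightarrow> z4vec" where
  "smul a x = map (\<lambda>t. a * t) x"

definition z4_linear_code :: "nat \<Rightarrow> z4vec set \<Rightarrow> bool" where
  "z4_linear_code n C \<longleftrightarrow> C \<subseteq> z4vecs n \<and> replicate n 0 \<in> C
     \<and> (\<forall>x\<in>C. \<forall>y\<in>C. vadd x y \<in> C) \<and> (\<forall>a. \<forall>x\<in>C. smul a x \<in> C)"

definition lee :: "4 \<Rightarrow> nat" where
  "lee t = (if t = 0 then 0 else if t = 2 then 2 else 1)"

definition lee_wt :: "z4vec \<Rightarrow> nat" where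
  "lee_wt x = sum_list (map lee x)"

definition inner4 :: "z4vec \<Rightarrow> z4vec \<Rightarrow> 4" where
  "inner4 x y = sum_list (map2 (*) x y)"

definition dual_code :: "nat \<Rightarrow> z4vec set \<Rightarrow> z4vec set" where
  "dual_code n C = {y \<in> z4vecs n. \<forall>x\<in>C. inner4 x y = 0}"

definition min_lee :: "nat \<Rightarrow> z4vec set \<Rightarrow> nat" where
  "min_lee n C = Min (lee_wt ` (C - {replicate n 0}))"

definition z4_projective :: "nat \<Rightarrow> z4vec set \<Rightarrow> bool" where
  "z4_projective n C \<longleftrightarrow> (\<forall>y \<in> dual_code n C. y \<noteq> replicate n 0 \<longrightarrow> lee_wt y \<ge> 3)"

definition plotkin_optimal :: "nat \<Rightarrow> z4vec set \<Rightarrow> bool" where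
  "plotkin_optimal n C \<longleftrightarrow>
     int (min_lee n C) = \<lfloor>real (card C) / (real (card C) - 1) * real n\<rfloor>"

end

theory Submission imports Defs begin
lemma ex4: "(x::4) = 0 \<or> x = 1 \<or> x = 2 \<or> x = 3"
proof (cases x)
  case (of_int z)
  then have "z = 0 \<or> z = 1 \<or> z = 2 \<or> z = 3" by auto
  then show ?thesis using of_int by auto
qed

lemma finite_z4vecs: "finite (z4vecs n)"
proof -
  have "z4vecs n = {xs. set xs \<subseteq> (UNIV::4 set) \<and> length xs = n}" by (auto simp: z4vecs_def)
  then show ?thesis using finite_lists_length_eq[of "UNIV::4 set" n] by simp
qed

lemma length_vadd[simp]: "length (vadd x y) = min (length x) (length y)"
  by (simp add: vadd_def)
lemma nth_vadd[simp]: "i < length x \<Longrightarrow> i < length y \<Longrightarrow> vadd x y ! i = x ! i + y ! i"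
  by (simp add: vadd_def)
lemma length_smul[simp]: "length (smul a x) = length x"
  by (simp add: smul_def)
lemma nth_smul[simp]: "i < length x \<Longrightarrow> smul a x ! i = a * x ! i"
  by (simp add: smul_def)

lemma lee_wt_sum: "lee_wt x = (\<Sum>i<length x. lee (x ! i))"
  unfolding lee_wt_def by (simp add: sum_list_sum_nth atLeast0LessThan)

lemma inner4_sum: "length y = length x \<Longrightarrow> inner4 x y = (\<Sum>i<length x. x ! i * y ! i)"
  unfolding inner4_def by (simp add: sum_list_sum_nth atLeast0LessThan)

lemma four0: "(4::4) = 0" by simp
lemma five1: "(5::4) = 1" by simp

lemma vadd_neg: "vadd (smul 3 c) c = replicate (length c) 0"
  by (rule nth_equalityI) (auto simp: four0)

lemma vadd_zero: "vadd c (replicate (length c) 0) = c"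
  by (rule nth_equalityI) auto

lemma vadd_cancel: "length x = length y \<Longrightarrow> length c = length x \<Longrightarrow> vadd c x = vadd c y \<Longrightarrow> x = y"
  apply (rule nth_equalityI, simp)
  by (metis add_left_cancel nth_vadd)

lemma lin_finite: "z4_linear_code n C \<Longrightarrow> finite C"
  unfolding z4_linear_code_def using finite_z4vecs finite_subset by blast

lemma lin_len: "z4_linear_code n C \<Longrightarrow> c \<in> C \<Longrightarrow> length c = n"
  unfolding z4_linear_code_def z4vecs_def by auto

lemma fiber_card:
  assumes lin: "z4_linear_code n C"
  and cong: "\<And>x y z. x\<in>C \<Longrightarrow> y\<in>C \<Longrightarrow> z\<in>C \<Longrightarrow> \<phi> x = \<phi> y \<Longrightarrow> \<phi> (vadd z x) = \<phi> (vadd z y)"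
  and c0: "c0 \<in> C"
  shows "card {c\<in>C. \<phi> c = \<phi> c0} = card {c\<in>C. \<phi> c = \<phi> (replicate n 0)}"
proof -
  have fin: "finite C" using lin_finite[OF lin] .
  have z: "replicate n 0 \<in> C" and add: "\<And>x y. x\<in>C \<Longrightarrow> y\<in>C \<Longrightarrow> vadd x y \<in> C"
    and sm: "\<And>a x. x\<in>C \<Longrightarrow> smul a x \<in> C" using lin unfolding z4_linear_code_def by auto
  have l0: "length c0 = n" using lin_len[OF lin c0] .
  define m where "m = smul 3 c0"
  have m: "m \<in> C" using sm c0 m_def by auto
  have lm: "length m = n" using l0 m_def by simp
  have "card {c\<in>C. \<phi> c = \<phi> (replicate n 0)} \<le> card {c\<in>C. \<phi> c = \<phi> c0}"
  proof (rule card_inj_on_le[where f="vadd c0"])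
    show "inj_on (vadd c0) {c \<in> C. \<phi> c = \<phi> (replicate n 0)}"
      by (rule inj_onI) (metis (mono_tags, lifting) l0 lin lin_len mem_Collect_eq vadd_cancel)
    show "vadd c0 ` {c \<in> C. \<phi> c = \<phi> (replicate n 0)} \<subseteq> {c \<in> C. \<phi> c = \<phi> c0}"
    proof clarify
      fix c assume "c \<in> C" "\<phi> c = \<phi> (replicate n 0)"
      then have "\<phi> (vadd c0 c) = \<phi> (vadd c0 (replicate n 0))" using cong c0 z by blast
      also have "vadd c0 (replicate n 0) = c0" using vadd_zero[of c0] l0 by simp
      finally show "vadd c0 c \<in> C \<and> \<phi> (vadd c0 c) = \<phi> c0" using add c0 \<open>c \<in> C\<close> by blast
    qed
  qed (use fin in auto)
  moreover have "card {c\<in>C. \<phi> c = \<phi> c0} \<le> card {c\<in>C. \<phi> c = \<phi> (replicate n 0)}"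
  proof (rule card_inj_on_le[where f="vadd m"])
    show "inj_on (vadd m) {c \<in> C. \<phi> c = \<phi> c0}"
      by (rule inj_onI) (metis (mono_tags, lifting) lm lin lin_len mem_Collect_eq vadd_cancel)
    show "vadd m ` {c \<in> C. \<phi> c = \<phi> c0} \<subseteq> {c \<in> C. \<phi> c = \<phi> (replicate n 0)}"
    proof clarify
      fix c assume "c \<in> C" "\<phi> c = \<phi> c0"
      then have "\<phi> (vadd m c) = \<phi> (vadd m c0)" using cong c0 m by blast
      also have "vadd m c0 = replicate n 0" using vadd_neg[of c0] l0 m_def by simp
      finally show "vadd m c \<in> C \<and> \<phi> (vadd m c) = \<phi> (replicate n 0)" using add m \<open>c \<in> C\<close> by blast
    qed
  qed (use fin in auto)
  ultimately show ?thesis by simp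
qed

lemma fiber_sum:
  fixes f :: "'b \<Rightarrow> nat"
  assumes lin: "z4_linear_code n C"
  and cong: "\<And>x y z. x\<in>C \<Longrightarrow> y\<in>C \<Longrightarrow> z\<in>C \<Longrightarrow> \<phi> x = \<phi> y \<Longrightarrow> \<phi> (vadd z x) = \<phi> (vadd z y)"
  shows "(\<Sum>c\<in>C. f (\<phi> c)) * card (\<phi> ` C) = card C * (\<Sum>v\<in>\<phi> ` C. f v)"
proof -
  have fin: "finite C" using lin_finite[OF lin] .
  define K where "K = card {c\<in>C. \<phi> c = \<phi> (replicate n 0)}"
  have K: "card {c\<in>C. \<phi> c = v} = K" if "v \<in> \<phi> ` C" for v
    using that fiber_card[of n C \<phi>, OF lin cong] K_def by blast
  have "(\<Sum>c\<in>C. f (\<phi> c)) = (\<Sum>v\<in>\<phi> ` C. \<Sum>c\<in>{c\<in>C. \<phi> c = v}. f (\<phi> c))"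
    by (rule sum.image_gen[OF fin])
  also have "\<dots> = (\<Sum>v\<in>\<phi> ` C. f v * K)"
  proof (rule sum.cong[OF refl])
    fix v assume "v \<in> \<phi> ` C"
    have "(\<Sum>c\<in>{c\<in>C. \<phi> c = v}. f (\<phi> c)) = (\<Sum>c\<in>{c\<in>C. \<phi> c = v}. f v)" by simp
    also have "\<dots> = f v * K" using K[OF \<open>v \<in> \<phi> ` C\<close>] by simp
    finally show "(\<Sum>c\<in>{c\<in>C. \<phi> c = v}. f (\<phi> c)) = f v * K" .
  qed
  finally have s1: "(\<Sum>c\<in>C. f (\<phi> c)) = (\<Sum>v\<in>\<phi> ` C. f v) * K" by (simp add: sum_distrib_right)
  have "card C = (\<Sum>c\<in>C. 1)" by simp
  also have "\<dots> = (\<Sum>v\<in>\<phi> ` C. \<Sum>c\<in>{c\<in>C. \<phi> c = v}. 1)"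
    by (rule sum.image_gen[OF fin])
  also have "\<dots> = (\<Sum>v\<in>\<phi> ` C. K)" using K by (intro sum.cong) auto
  finally have s2: "card C = card (\<phi> ` C) * K" by simp
  show ?thesis using s1 s2 by simp
qed

lemma odd_sq: "2 * (a::4) \<noteq> 0 \<Longrightarrow> a * a = 1"
  using ex4[of a] by auto
lemma odd_two: "2 * (a::4) \<noteq> 0 \<Longrightarrow> 2 * a = 2"
  using ex4[of a] by auto
lemma even_cases: "2 * (a::4) = 0 \<Longrightarrow> a = 0 \<or> a = 2"
  using ex4[of a] by auto

lemma pair_class:
  fixes D :: "(4 \<times> 4) set"
  assumes lc: "\<And>a b c d t r. (a,b)\<in>D \<Longrightarrow> (c,d)\<in>D \<Longrightarrow> (t*a + r*c, t*b + r*d)\<in>D"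
  and h1: "(a1,b1)\<in>D" "2*a1 \<noteq> 0"
  and h2: "(a2,b2)\<in>D" "2*b2 \<noteq> 0"
  and h3: "(a3,b3)\<in>D" "a3+b3 \<noteq> 0"
  and h4: "(a4,b4)\<in>D" "a4+3*b4 \<noteq> 0"
  shows "D = {(a,b). 2*a = 2*b} \<or> D = UNIV"
proof -
  have sc: "(t*a, t*b) \<in> D" if "(a,b)\<in>D" for t a b
    using lc[OF that that, of t 0] by simp
  have ad: "(a+c, b+d) \<in> D" if "(a,b)\<in>D" "(c,d)\<in>D" for a b c d
    using lc[OF that, of 1 1] by simp
  define s where "s = a1 * b1"
  have p1: "(1, s) \<in> D" using sc[OF h1(1), of a1] odd_sq[OF h1(2)] s_def by simp
  have L: "(0,2) \<in> D" if "(0,w) \<in> D" "w \<noteq> 0" for w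
  proof (cases "2*w = 0")
    case True then have "w = 2" using even_cases that(2) by blast
    then show ?thesis using that by simp
  next
    case False then show ?thesis using sc[OF that(1), of 2] odd_two[OF False] by simp
  qed
  define u where "u = b2 - a2 * s"
  have pu: "(0, u) \<in> D" using lc[OF h2(1) p1, of 1 "-a2"] u_def by simp
  have p02: "(0,2) \<in> D"
  proof (cases "u = 0")
    case False then show ?thesis using L pu by blast
  next
    case True
    then have "2 * s \<noteq> 0" using h2(2) u_def by (metis eq_iff_diff_eq_0 mult.left_commute mult_zero_right)
    then have "s = 1 \<or> s = 3" using ex4[of s] by auto
    then show ?thesis
    proof
      assume "s = 1"
      then have "(0, b4 - a4) \<in> D" using lc[OF h4(1) p1, of 1 "-a4"] by simp
      moreover have "b4 - a4 \<noteq> 0"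
      proof
        assume "b4 - a4 = 0" then have "a4 + 3*b4 = 4*a4" by (simp add: algebra_simps)
        then show False using h4(2) four0 by simp
      qed
      ultimately show ?thesis using L by blast
    next
      assume "s = 3"
      then have "(0, b3 - 3*a3) \<in> D" using lc[OF h3(1) p1, of 1 "-a3"] by (simp add: algebra_simps)
      moreover have "b3 - 3*a3 \<noteq> 0" using h3(2) ex4[of a3] ex4[of b3] by auto
      ultimately show ?thesis using L by blast
    qed
  qed
  have p11: "(1,1) \<in> D"
  proof -
    have "s = 0 \<or> s = 1 \<or> s = 2 \<or> s = 3" by (rule ex4)
    moreover have ?thesis if "s = 3" using ad[OF p1 p02] that five1 by simp
    moreover have ?thesis if "s = 0 \<or> s = 2"
    proof -
      have "2 * u \<noteq> 0" using that h2(2) u_def ex4[of a2] ex4[of b2] by auto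
      then have "(0, 1) \<in> D" using sc[OF pu, of u] odd_sq by simp
      then show ?thesis using lc[OF p1 \<open>(0,1)\<in>D\<close>, of 1 "1 - s"] by (simp add: algebra_simps)
    qed
    ultimately show ?thesis using p1 by auto
  qed
  have E: "{(a,b). 2*a = 2*b} \<subseteq> D"
  proof clarify
    fix x y :: 4 assume "2*x = 2*y"
    then have "2*(y - x) = 0" by (simp add: algebra_simps)
    then have "y - x = 0 \<or> y - x = 2" using even_cases by blast
    then show "(x,y) \<in> D"
    proof
      assume "y - x = 0" then show ?thesis using sc[OF p11, of x] by simp
    next
      assume "y - x = 2" then have "y = x + 2" by (simp add: algebra_simps)
      then show ?thesis using lc[OF p11 p02, of x 1] by simp
    qed
  qed
  show ?thesis
  proof (cases "D \<subseteq> {(a,b). 2*a = 2*b}")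
    case True then show ?thesis using E by blast
  next
    case False
    then obtain x y where xy: "(x,y) \<in> D" "2*x \<noteq> 2*y" by auto
    have "(0, y - x) \<in> D" using lc[OF xy(1) p11, of 1 "-x"] by simp
    moreover have "2*(y-x) \<noteq> 0" using xy(2) by (simp add: algebra_simps)
    ultimately have "(0, 1) \<in> D" using sc[of 0 "y-x" "y-x"] odd_sq by simp
    have "(p,q) \<in> D" for p q using lc[OF p11 \<open>(0,1)\<in>D\<close>, of p "q - p"] by simp
    then show ?thesis by auto
  qed
qed

lemma nth_uv1: "k < n \<Longrightarrow> (replicate n (0::4))[i := a] ! k = (if k = i then a else 0)"
  by (simp add: nth_list_update)

lemma nth_uv2: "k < n \<Longrightarrow> (replicate n (0::4))[i := a, j := b] ! k = (if k = j then b else if k = i then a else 0)"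
  by (simp add: nth_list_update)

lemma inner_uv1:
  assumes "length x = n" "i < n"
  shows "inner4 x ((replicate n 0)[i := a]) = x ! i * a"
proof -
  have "inner4 x ((replicate n 0)[i := a]) = (\<Sum>k<n. x ! k * (replicate n 0)[i := a] ! k)"
    using inner4_sum[of "(replicate n 0)[i := a]" x] assms by simp
  also have "\<dots> = (\<Sum>k<n. if k = i then x ! i * a else 0)"
    by (rule sum.cong) (auto simp: nth_uv1)
  finally show ?thesis using assms by simp
qed

lemma inner_uv2:
  assumes "length x = n" "i < n" "j < n" "i \<noteq> j"
  shows "inner4 x ((replicate n 0)[i := a, j := b]) = x ! i * a + x ! j * b"
proof -
  have "inner4 x ((replicate n 0)[i := a, j := b]) = (\<Sum>k<n. x ! k * (replicate n 0)[i := a, j := b] ! k)"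
    using inner4_sum[of "(replicate n 0)[i := a, j := b]" x] assms by simp
  also have "\<dots> = (\<Sum>k<n. (if k = i then x ! i * a else 0) + (if k = j then x ! j * b else 0))"
    by (rule sum.cong) (use assms in \<open>auto simp: nth_uv2\<close>)
  finally show ?thesis using assms by (simp add: sum.distrib)
qed

lemma lee0[simp]: "lee 0 = 0" by (simp add: lee_def)

lemma lee_uv1:
  assumes "i < n"
  shows "lee_wt ((replicate n 0)[i := a]) = lee a"
proof -
  have "lee_wt ((replicate n 0)[i := a]) = (\<Sum>k<n. lee ((replicate n 0)[i := a] ! k))"
    by (simp add: lee_wt_sum)
  also have "\<dots> = (\<Sum>k<n. if k = i then lee a else 0)"
    by (rule sum.cong) (auto simp: nth_uv1)
  finally show ?thesis using assms by simp
qed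

lemma lee_uv2:
  assumes "i < n" "j < n" "i \<noteq> j"
  shows "lee_wt ((replicate n 0)[i := a, j := b]) = lee a + lee b"
proof -
  have "lee_wt ((replicate n 0)[i := a, j := b]) = (\<Sum>k<n. lee ((replicate n 0)[i := a, j := b] ! k))"
    by (simp add: lee_wt_sum)
  also have "\<dots> = (\<Sum>k<n. (if k = i then lee a else 0) + (if k = j then lee b else 0))"
    by (rule sum.cong) (use assms in \<open>auto simp: nth_uv2\<close>)
  finally show ?thesis using assms by (simp add: sum.distrib)
qed

lemma proj_wit:
  assumes "z4_projective n C" "y \<in> z4vecs n" "y \<noteq> replicate n 0" "lee_wt y < 3"
  shows "\<exists>x\<in>C. inner4 x y \<noteq> 0"
  using assms unfolding z4_projective_def dual_code_def by force

lemma wit1: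
  assumes "z4_linear_code n C" "z4_projective n C" "i < n" "a \<noteq> 0"
  shows "\<exists>x\<in>C. x ! i * a \<noteq> 0"
proof -
  have "(replicate n 0)[i := a] \<noteq> replicate n 0"
    using assms(3,4) by (metis length_replicate nth_list_update_eq nth_replicate)
  moreover have "lee a < 3" by (simp add: lee_def)
  ultimately obtain x where "x \<in> C" "inner4 x ((replicate n 0)[i := a]) \<noteq> 0"
    using proj_wit[OF assms(2), of "(replicate n 0)[i := a]"] assms(3)
    by (auto simp: z4vecs_def lee_uv1)
  then show ?thesis using inner_uv1 lin_len[OF assms(1)] assms(3) by metis
qed

lemma wit2:
  assumes "z4_linear_code n C" "z4_projective n C" "i < n" "j < n" "i \<noteq> j" "2 * b \<noteq> 0"
  shows "\<exists>x\<in>C. x ! i + x ! j * b \<noteq> 0"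
proof -
  have "(replicate n 0)[i := 1, j := b] \<noteq> replicate n 0"
    using assms(3,4,5) by (metis length_list_update length_replicate nth_list_update_eq nth_list_update_neq nth_replicate zero_neq_one)
  moreover have "lee 1 + lee b < 3" using assms(6) ex4[of b] by (auto simp: lee_def)
  ultimately obtain x where "x \<in> C" "inner4 x ((replicate n 0)[i := 1, j := b]) \<noteq> 0"
    using proj_wit[OF assms(2), of "(replicate n 0)[i := 1, j := b]"] assms(3,4,5)
    by (auto simp: z4vecs_def lee_uv2)
  then show ?thesis using inner_uv2 lin_len[OF assms(1)] assms(3,4,5) by (metis mult.right_neutral)
qed

lemma UNIV4: "(UNIV::4 set) = {0,1,2,3}" using ex4 by auto

lemma coord_image:
  assumes lin: "z4_linear_code n C" and proj: "z4_projective n C" and i: "i < n"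
  shows "(\<lambda>c. c ! i) ` C = UNIV"
proof -
  obtain x where x: "x \<in> C" "x ! i * 2 \<noteq> 0" using wit1[OF lin proj i, of 2] by auto
  have "t \<in> (\<lambda>c. c ! i) ` C" for t
  proof
    have "smul (t * x ! i) x \<in> C" using lin x(1) unfolding z4_linear_code_def by blast
    then show "smul (t * x ! i) x \<in> C" .
    have "x ! i * x ! i = 1" using odd_sq x(2) by (simp add: mult.commute)
    then show "t = smul (t * x ! i) x ! i" using lin_len[OF lin x(1)] i by (simp add: mult.assoc)
  qed
  then show ?thesis by auto
qed

lemma pair_image:
  assumes lin: "z4_linear_code n C" and proj: "z4_projective n C" and ij: "i < n" "j < n" "i \<noteq> j"
  shows "(\<lambda>c. (c ! i, c ! j)) ` C = {(a,b). 2*a = 2*b} \<or> (\<lambda>c. (c ! i, c ! j)) ` C = UNIV"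
proof -
  let ?D = "(\<lambda>c. (c ! i, c ! j)) ` C"
  have lc: "(t*a + r*c, t*b + r*d) \<in> ?D" if ab: "(a,b) \<in> ?D" and cd: "(c,d) \<in> ?D" for a b c d t r
  proof -
    obtain x where x: "x \<in> C" "a = x ! i" "b = x ! j" using ab by force
    obtain y where y: "y \<in> C" "c = y ! i" "d = y ! j" using cd by force
    have "vadd (smul t x) (smul r y) \<in> C" using lin x(1) y(1) unfolding z4_linear_code_def by blast
    moreover have "length x = n" "length y = n" using lin_len[OF lin] x y by auto
    ultimately show ?thesis using x y ij by (auto intro!: image_eqI[where x="vadd (smul t x) (smul r y)"])
  qed
  obtain x1 where x1: "x1 \<in> C" "x1 ! i * 2 \<noteq> 0" using wit1[OF lin proj ij(1), of 2] by auto
  obtain x2 where x2: "x2 \<in> C" "x2 ! j * 2 \<noteq> 0" using wit1[OF lin proj ij(2), of 2] by auto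
  obtain x3 where x3: "x3 \<in> C" "x3 ! i + x3 ! j * 1 \<noteq> 0" using wit2[OF lin proj ij, of 1] by auto
  obtain x4 where x4: "x4 \<in> C" "x4 ! i + x4 ! j * 3 \<noteq> 0" using wit2[OF lin proj ij, of 3] by auto
  show ?thesis
  proof (rule pair_class[OF lc])
    show "(x1 ! i, x1 ! j) \<in> ?D" "2 * x1 ! i \<noteq> 0" using x1 by (auto simp: mult.commute)
    show "(x2 ! i, x2 ! j) \<in> ?D" "2 * x2 ! j \<noteq> 0" using x2 by (auto simp: mult.commute)
    show "(x3 ! i, x3 ! j) \<in> ?D" "x3 ! i + x3 ! j \<noteq> 0" using x3 by auto
    show "(x4 ! i, x4 ! j) \<in> ?D" "x4 ! i + 3 * x4 ! j \<noteq> 0" using x4 by (auto simp: mult.commute)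
  qed
qed

lemma E_eq: "{(a,b). 2*a = 2*(b::4)} = {(0,0),(0,2),(2,0),(2,2),(1,1),(1,3),(3,1),(3,3)}"
proof -
  have "2*a = 2*b \<longleftrightarrow> (a,b) \<in> {(0,0),(0,2),(2,0),(2,2),(1,1),(1,3),(3,1),(3,3)}" for a b :: 4
    using ex4[of a] ex4[of b] by auto
  then show ?thesis by auto
qed

lemma E_card: "card {(a,b). 2*a = 2*(b::4)} = 8" unfolding E_eq by simp
lemma E_sum: "(\<Sum>(a,b)\<in>{(a,b). 2*a = 2*(b::4)}. lee a * lee b) = 8" unfolding E_eq by (simp add: lee_def)
lemma U_card: "card (UNIV :: (4\<times>4) set) = 16" by simp
lemma U_sum: "(\<Sum>(a,b)\<in>(UNIV :: (4\<times>4) set). lee a * lee b) = 16"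
  unfolding UNIV_Times_UNIV[symmetric] sum.cartesian_product[symmetric] UNIV4 by (simp add: lee_def)
lemma U1_sum: "(\<Sum>a\<in>(UNIV :: 4 set). lee a) = 4" unfolding UNIV4 by (simp add: lee_def)
lemma U2_sum: "(\<Sum>a\<in>(UNIV :: 4 set). lee a * lee a) = 6" unfolding UNIV4 by (simp add: lee_def)

lemma coord_cong:
  assumes lin: "z4_linear_code n C" and i: "i < n"
  shows "\<And>x y z. x\<in>C \<Longrightarrow> y\<in>C \<Longrightarrow> z\<in>C \<Longrightarrow> x ! i = y ! i \<Longrightarrow> vadd z x ! i = vadd z y ! i"
  using lin_len[OF lin] i by simp

lemma pair_cong:
  assumes lin: "z4_linear_code n C" and i: "i < n" "j < n"
  shows "\<And>x y z. x\<in>C \<Longrightarrow> y\<in>C \<Longrightarrow> z\<in>C \<Longrightarrow> (x ! i, x ! j) = (y ! i, y ! j) \<Longrightarrow> (vadd z x ! i, vadd z x ! j) = (vadd z y ! i, vadd z y ! j)"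
  using lin_len[OF lin] i by simp

lemma coord_sum1:
  assumes lin: "z4_linear_code n C" and proj: "z4_projective n C" and i: "i < n"
  shows "(\<Sum>c\<in>C. lee (c ! i)) = card C"
proof -
  have "(\<Sum>c\<in>C. lee (c ! i)) * card ((\<lambda>c. c ! i) ` C) = card C * (\<Sum>v\<in>(\<lambda>c. c ! i) ` C. lee v)"
    by (rule fiber_sum[of n C "\<lambda>c. c ! i", OF lin coord_cong[OF lin i]])
  then show ?thesis unfolding coord_image[OF lin proj i] U1_sum by simp
qed

lemma coord_sum2:
  assumes lin: "z4_linear_code n C" and proj: "z4_projective n C" and i: "i < n"
  shows "2 * (\<Sum>c\<in>C. lee (c ! i) * lee (c ! i)) = 3 * card C"
proof -
  have "(\<Sum>c\<in>C. (\<lambda>v. lee v * lee v) (c ! i)) * card ((\<lambda>c. c ! i) ` C) = card C * (\<Sum>v\<in>(\<lambda>c. c ! i) ` C. lee v * lee v)"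
    by (rule fiber_sum[of n C "\<lambda>c. c ! i", OF lin coord_cong[OF lin i]])
  then show ?thesis unfolding coord_image[OF lin proj i] U2_sum by simp
qed

lemma pair_sum:
  assumes lin: "z4_linear_code n C" and proj: "z4_projective n C" and ij: "i < n" "j < n" "i \<noteq> j"
  shows "(\<Sum>c\<in>C. lee (c ! i) * lee (c ! j)) = card C"
proof -
  let ?D = "(\<lambda>c. (c ! i, c ! j)) ` C"
  have "(\<Sum>c\<in>C. (\<lambda>(a,b). lee a * lee b) (c ! i, c ! j)) * card ?D = card C * (\<Sum>v\<in>?D. (\<lambda>(a,b). lee a * lee b) v)"
    by (rule fiber_sum[of n C "\<lambda>c. (c ! i, c ! j)", OF lin pair_cong[OF lin ij(1,2)]])
  then have *: "(\<Sum>c\<in>C. lee (c ! i) * lee (c ! j)) * card ?D = card C * (\<Sum>(a,b)\<in>?D. lee a * lee b)"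
    by simp
  from pair_image[OF lin proj ij] show ?thesis
  proof
    assume "?D = {(a,b). 2*a = 2*b}"
    then show ?thesis using * E_card E_sum by simp
  next
    assume "?D = UNIV"
    then show ?thesis using * U_card U_sum by simp
  qed
qed

lemma moment1:
  assumes lin: "z4_linear_code n C" and proj: "z4_projective n C"
  shows "(\<Sum>c\<in>C. lee_wt c) = n * card C"
proof -
  have "(\<Sum>c\<in>C. lee_wt c) = (\<Sum>c\<in>C. \<Sum>i<n. lee (c ! i))"
    using lin_len[OF lin] by (intro sum.cong) (auto simp: lee_wt_sum)
  also have "\<dots> = (\<Sum>i<n. \<Sum>c\<in>C. lee (c ! i))" by (rule sum.swap)
  also have "\<dots> = (\<Sum>i<n. card C)" using coord_sum1[OF lin proj] by simp
  finally show ?thesis by simp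
qed

lemma moment2:
  assumes lin: "z4_linear_code n C" and proj: "z4_projective n C"
  shows "2 * (\<Sum>c\<in>C. lee_wt c ^ 2) = card C * (2*n*n + n)"
proof -
  have "(\<Sum>c\<in>C. lee_wt c ^ 2) = (\<Sum>c\<in>C. \<Sum>i<n. \<Sum>j<n. lee (c ! i) * lee (c ! j))"
    using lin_len[OF lin] by (intro sum.cong) (auto simp: lee_wt_sum power2_eq_square sum_product)
  also have "\<dots> = (\<Sum>i<n. \<Sum>c\<in>C. \<Sum>j<n. lee (c ! i) * lee (c ! j))" by (rule sum.swap)
  also have "\<dots> = (\<Sum>i<n. \<Sum>j<n. \<Sum>c\<in>C. lee (c ! i) * lee (c ! j))" by (simp add: sum.swap[of _ C])
  finally have "2 * (\<Sum>c\<in>C. lee_wt c ^ 2) = (\<Sum>i<n. \<Sum>j<n. 2 * (\<Sum>c\<in>C. lee (c ! i) * lee (c ! j)))"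
    by (simp add: sum_distrib_left)
  also have "\<dots> = (\<Sum>i<n. \<Sum>j<n. 2 * card C + (if j = i then card C else 0))"
  proof (intro sum.cong refl)
    fix i j assume "i \<in> {..<n}" "j \<in> {..<n}"
    then show "2 * (\<Sum>c\<in>C. lee (c ! i) * lee (c ! j)) = 2 * card C + (if j = i then card C else 0)"
      using coord_sum2[OF lin proj, of i] pair_sum[OF lin proj, of i j] by auto
  qed
  also have "\<dots> = (\<Sum>i<n. 2 * card C * n + card C)" by (simp add: sum.distrib)
  finally show ?thesis by (simp add: algebra_simps)
qed

lemma lee_wt_zero: "lee_wt (replicate n 0) = 0"
  by (simp add: lee_wt_def)

theorem corollary4p4:
  fixes n :: nat and C :: "z4vec set" and w1 w2 :: nat
  assumes "z4_linear_code n C"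
    and "z4_projective n C"
    and "lee_wt ` (C - {replicate n 0}) = {w1, w2}"
    and "w1 < w2"
  shows "(plotkin_optimal n C \<longleftrightarrow> w1 = n) \<and> (w1 = n \<longleftrightarrow> 2 * w2 = card C)"
proof -
  note lin = assms(1) and proj = assms(2) and img = assms(3) and w12 = assms(4)
  define z where "z = replicate n (0::4)"
  define N where "N = C - {z}"
  define M where "M = card C"
  have fin: "finite C" using lin_finite[OF lin] .
  have zC: "z \<in> C" using lin unfolding z4_linear_code_def z_def by blast
  have wz: "lee_wt z = 0" unfolding z_def by (rule lee_wt_zero)
  have finN: "finite N" using fin N_def by simp
  have cardN: "card N = M - 1" using zC fin N_def M_def by simp
  have imgN: "lee_wt ` N = {w1, w2}" using img N_def z_def by simp
  then obtain c1 where c1: "c1 \<in> N" by blast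
  have M2: "M \<ge> 2"
  proof -
    have "{z, c1} \<subseteq> C" "z \<noteq> c1" using c1 zC N_def by auto
    then have "card {z, c1} \<le> M" using card_mono[OF fin] M_def by blast
    then show ?thesis using \<open>z \<noteq> c1\<close> by simp
  qed
  have npos: "n \<ge> 1"
  proof (rule ccontr)
    assume "\<not> n \<ge> 1" then have "n = 0" by simp
    then have "c1 = z" using c1 lin_len[OF lin] N_def z_def by auto
    then show False using c1 N_def by simp
  qed
  have wN: "lee_wt c = w1 \<or> lee_wt c = w2" if "c \<in> N" for c using imgN that by blast
  define A where "A = (\<Sum>c\<in>N. int (lee_wt c))"
  define B where "B = (\<Sum>c\<in>N. int (lee_wt c) ^ 2)"
  have "(\<Sum>c\<in>C. lee_wt c) = lee_wt z + (\<Sum>c\<in>N. lee_wt c)"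
    using sum.remove[OF fin zC] N_def by simp
  then have "(\<Sum>c\<in>N. lee_wt c) = n * M" using moment1[OF lin proj] wz M_def by simp
  moreover have "A = int (\<Sum>c\<in>N. lee_wt c)" unfolding A_def by simp
  ultimately have A: "A = int n * int M" by simp
  have "(\<Sum>c\<in>C. lee_wt c ^ 2) = lee_wt z ^ 2 + (\<Sum>c\<in>N. lee_wt c ^ 2)"
    using sum.remove[OF fin zC] N_def by simp
  then have "2 * (\<Sum>c\<in>N. lee_wt c ^ 2) = M * (2*n*n + n)" using moment2[OF lin proj] wz M_def by simp
  moreover have "B = int (\<Sum>c\<in>N. lee_wt c ^ 2)" unfolding B_def by simp
  ultimately have B: "2 * B = int M * (2 * int n * int n + int n)"
    by (metis (no_types, lifting) of_nat_mult of_nat_add of_nat_numeral)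
  have "(\<Sum>c\<in>N. (int (lee_wt c) - int w1) * (int (lee_wt c) - int w2)) = 0"
    using wN by (intro sum.neutral) auto
  moreover have "(\<Sum>c\<in>N. (int (lee_wt c) - int w1) * (int (lee_wt c) - int w2))
      = B - (int w1 + int w2) * A + int w1 * int w2 * int (card N)"
    unfolding A_def B_def by (simp add: algebra_simps power2_eq_square sum.distrib sum_subtractf sum_distrib_left)
  ultimately have I0: "B - (int w1 + int w2) * A + int w1 * int w2 * (int M - 1) = 0"
    using cardN M2 by (simp add: of_nat_diff)
  have I1: "int M * (2 * (int n - int w1) * (int n - int w2) + int n) = 2 * int w1 * int w2"
  proof -
    have "2 * B - 2 * (int w1 + int w2) * A + 2 * int w1 * int w2 * (int M - 1) = 0" using I0 by algebra
    then show ?thesis unfolding A B by algebra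
  qed
  have eq23: "w1 = n \<longleftrightarrow> 2 * w2 = M"
  proof
    assume "w1 = n"
    then have "int w1 = int n" by simp
    then have "int M * int n = 2 * int n * int w2" using I1 by simp
    then have "int n * (int M - 2 * int w2) = 0" by (simp add: algebra_simps)
    then show "2 * w2 = M" using npos by simp
  next
    assume h: "2 * w2 = M"
    then have "int M = 2 * int w2" by simp
    then have "2 * int w2 * ((int n - int w1) * (2 * (int n - int w2) + 1)) = 0" using I1 by algebra
    moreover have "2 * (int n - int w2) + 1 \<noteq> 0" by presburger
    ultimately show "w1 = n" using w12 by simp
  qed
  have minw: "min_lee n C = w1" unfolding min_lee_def using img w12 by simp
  have noabove: False if ge: "\<forall>c\<in>N. lee_wt c \<ge> n + 1"
  proof -
    have "(\<Sum>c\<in>N. int (lee_wt c) - int n) = A - int n * int (card N)" unfolding A_def by (simp add: sum_subtractf)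
    also have "\<dots> = int n" using A cardN M2 by (simp add: of_nat_diff algebra_simps)
    finally have s1: "(\<Sum>c\<in>N. int (lee_wt c) - int n) = int n" .
    have "(\<Sum>c\<in>N. (int (lee_wt c) - int n)^2) = B - 2 * int n * A + int n * int n * int (card N)"
      unfolding A_def B_def by (simp add: algebra_simps power2_eq_square sum.distrib sum_subtractf sum_distrib_left)
    then have s2: "2 * (\<Sum>c\<in>N. (int (lee_wt c) - int n)^2) = int M * int n - 2 * int n * int n"
      using A B cardN M2 by (simp add: of_nat_diff algebra_simps)
    have "(\<Sum>c\<in>N. int (lee_wt c) - int n) \<le> (\<Sum>c\<in>N. (int (lee_wt c) - int n)^2)"
    proof (rule sum_mono)
      fix c assume "c \<in> N"
      then have "int (lee_wt c) - int n \<ge> 1" using ge by force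
      then show "int (lee_wt c) - int n \<le> (int (lee_wt c) - int n)^2" by (simp add: power2_eq_square)
    qed
    then have t1: "2 * int n \<le> int M * int n - 2 * int n * int n" using s1 s2 by simp
    have "(\<Sum>c\<in>N. (1::int)) \<le> (\<Sum>c\<in>N. int (lee_wt c) - int n)"
      by (rule sum_mono) (use ge in force)
    then have t2: "int M - 1 \<le> int n" using s1 cardN M2 by (simp add: of_nat_diff)
    have "int n * 2 \<le> int n * (int M - 2 * int n)" using t1 by (simp add: algebra_simps)
    then have "2 \<le> int M - 2 * int n" using npos by (simp add: mult_le_cancel_left_pos)
    then show False using t2 npos t1 by linarith
  qed
  define q where "q = real M / (real M - 1) * real n"
  have Mr: "real M - 1 > 0" using M2 by simp
  have q: "q = real n + real n / (real M - 1)" unfolding q_def using Mr by (simp add: field_simps)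
  have qn: "real n \<le> q" unfolding q using Mr by simp
  have eq12: "plotkin_optimal n C \<longleftrightarrow> w1 = n"
  proof
    assume "plotkin_optimal n C"
    then have pw: "int w1 = \<lfloor>q\<rfloor>" unfolding plotkin_optimal_def minw q_def M_def by simp
    have "int n \<le> \<lfloor>q\<rfloor>" using qn by (simp add: le_floor_iff)
    then have "n \<le> w1" using pw by simp
    show "w1 = n"
    proof (rule ccontr)
      assume "w1 \<noteq> n"
      then have "\<forall>c\<in>N. lee_wt c \<ge> n + 1" using \<open>n \<le> w1\<close> w12 wN by force
      then show False by (rule noabove)
    qed
  next
    assume h: "w1 = n"
    then have "2 * w2 = M" using eq23 by simp
    then have "M \<ge> 2 * n + 2" using h w12 by simp
    then have "real n / (real M - 1) < 1" using Mr by (simp add: divide_less_eq)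
    then have "\<lfloor>q\<rfloor> = int n" unfolding q using Mr by (simp add: floor_eq_iff)
    then show "plotkin_optimal n C" unfolding plotkin_optimal_def minw M_def[symmetric] q_def[symmetric] using h by simp
  qed
  show ?thesis using eq12 eq23 M_def by simp
qed

end
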